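(* Let $W_1,W_2,\dots$ be graphons on $\Omega$ with $\|W_n-W\|_\square\to0$ for a graphon $W$. Let $A_n,B_n\subseteq\Omega$ be measurable sets with $\int_{A_n\times B_n}W_n\,d\mu^2=0$ for every $n$, and suppose that $\mathbf{1}_{A_n}$ converges weak* to $a\in L^\infty(\Omega)$ and $\mathbf{1}_{B_n}$ converges weak* to $b\in L^\infty(\Omega)$. Then $\int_{\mathrm{supp}(a)\times\mathrm{supp}(b)}W\,d\mu^2=0$.
   Context: $(\Omega,\mu)$ is an atomless standard probability space; a graphon is a symmetric measurable $W:\Omega^2\to[0,1]$. The cut norm is $\|U\|_\square=\sup_{S,T\subseteq\Omega}\left|\int_{S\times T}U\,d\mu^2\right|$. A sequence $g_n\in L^\infty(\Omega)$ converges weak* to $g$ if $\int_X g_n\,d\mu\to\int_X g\,d\mu$ for every measurable $X\subseteq\Omega$. For a measurable function $g$, $\mathrm{supp}(g)=\{x:g(x)\neq0\}$. *)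

theory Defs
  imports "HOL-Probability.Probability"
begin

definition std_atomless_prob_space :: "'a::polish_space measure \<Rightarrow> bool" where
  "std_atomless_prob_space M \<longleftrightarrow> prob_space M \<and> sets M = sets borel
      \<and> (\<forall>x. emeasure M {x} = 0)"

definition graphon :: "'a measure \<Rightarrow> ('a \<times> 'a \<Rightarrow> real) \<Rightarrow> bool" where
  "graphon M W \<longleftrightarrow> W \<in> borel_measurable (M \<Otimes>\<^sub>M M)
      \<and> (\<forall>x\<in>space M. \<forall>y\<in>space M. W (x, y) = W (y, x))
      \<and> (\<forall>x\<in>space M. \<forall>y\<in>space M. 0 \<le> W (x, y) \<and> W (x, y) \<le> 1)"

definition cut_norm :: "'a measure \<Rightarrow> ('a \<times> 'a \<Rightarrow> real) \<Rightarrow> real" where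
  "cut_norm M U = (SUP ST \<in> sets M \<times> sets M.
      \<bar>set_lebesgue_integral (M \<Otimes>\<^sub>M M) (fst ST \<times> snd ST) U\<bar>)"

definition Linfty :: "'a measure \<Rightarrow> ('a \<Rightarrow> real) set" where
  "Linfty M = {g. g \<in> borel_measurable M \<and> (\<exists>C. AE x in M. \<bar>g x\<bar> \<le> C)}"

definition weak_star_conv :: "'a measure \<Rightarrow> (nat \<Rightarrow> 'a \<Rightarrow> real) \<Rightarrow> ('a \<Rightarrow> real) \<Rightarrow> bool" where
  "weak_star_conv M g h \<longleftrightarrow> (\<forall>X\<in>sets M.
      (\<lambda>n. set_lebesgue_integral M X (g n)) \<longlonglongrightarrow> set_lebesgue_integral M X h)"

definition supp :: "('a \<Rightarrow> real) \<Rightarrow> 'a set" where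
  "supp g = {x. g x \<noteq> 0}"

end

theory Submission
  imports Defs
begin

lemma int_c_mult:
  fixes c h :: "'a \<Rightarrow> real"
  assumes cm: "c \<in> borel_measurable M" and cb: "AE x in M. \<bar>c x\<bar> \<le> K" and h: "integrable M h"
  shows "integrable M (\<lambda>x. c x * h x)"
proof (rule Bochner_Integration.integrable_bound[OF integrable_mult_right[OF h, of "\<bar>K\<bar>"]])
  show "(\<lambda>x. c x * h x) \<in> borel_measurable M" using cm h by measurable
  show "AE x in M. norm (c x * h x) \<le> norm (\<bar>K\<bar> * h x)"
    using cb by eventually_elim (auto simp: abs_mult intro!: mult_right_mono)
qed

lemma int_ind_mult:
  fixes h :: "'a \<Rightarrow> real"
  assumes "A \<in> sets M" "integrable M h"
  shows "integrable M (\<lambda>x. indicator A x * h x)"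
  using integrable_mult_indicator[OF assms] by simp

lemma wk_int:
  fixes M :: "'a measure" and C :: "nat \<Rightarrow> 'a set" and c g :: "'a \<Rightarrow> real"
  assumes C: "\<And>n. C n \<in> sets M" and cm: "c \<in> borel_measurable M"
    and cb: "AE x in M. \<bar>c x\<bar> \<le> K" and w: "weak_star_conv M (\<lambda>n. indicator (C n)) c"
    and g: "integrable M g"
  shows "(\<lambda>n. \<integral>x. indicator (C n) x * g x \<partial>M) \<longlonglongrightarrow> (\<integral>x. c x * g x \<partial>M)"
  using g
proof (induct rule: integrable_induct)
  case (base A d)
  have "(\<lambda>n. set_lebesgue_integral M A (indicator (C n))) \<longlonglongrightarrow> set_lebesgue_integral M A c"
    using w base(1) unfolding weak_star_conv_def by blast
  then have "(\<lambda>n. d * set_lebesgue_integral M A (indicator (C n))) \<longlonglongrightarrow> d * set_lebesgue_integral M A c"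
    by (rule tendsto_mult_left)
  moreover have "\<And>n. (\<integral>x. indicator (C n) x * (indicator A x *\<^sub>R d) \<partial>M) = d * set_lebesgue_integral M A (indicator (C n))"
  proof -
    fix n
    have "(\<integral>x. indicator (C n) x * (indicator A x *\<^sub>R d) \<partial>M) = (\<integral>x. d * (indicator A x *\<^sub>R indicator (C n) x) \<partial>M)"
      by (rule Bochner_Integration.integral_cong) auto
    then show "(\<integral>x. indicator (C n) x * (indicator A x *\<^sub>R d) \<partial>M) = d * set_lebesgue_integral M A (indicator (C n))"
      unfolding set_lebesgue_integral_def by simp
  qed
  moreover have "(\<integral>x. c x * (indicator A x *\<^sub>R d) \<partial>M) = d * set_lebesgue_integral M A c"
  proof -
    have "(\<integral>x. c x * (indicator A x *\<^sub>R d) \<partial>M) = (\<integral>x. d * (indicator A x *\<^sub>R c x) \<partial>M)"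
      by (rule Bochner_Integration.integral_cong) auto
    then show ?thesis
      unfolding set_lebesgue_integral_def by simp
  qed
  ultimately show ?case by simp
next
  case (add f h)
  have "\<And>n. (\<integral>x. indicator (C n) x * (f x + h x) \<partial>M) = (\<integral>x. indicator (C n) x * f x \<partial>M) + (\<integral>x. indicator (C n) x * h x \<partial>M)"
    by (subst Bochner_Integration.integral_add[symmetric])
       (auto intro!: int_ind_mult C add Bochner_Integration.integral_cong simp: distrib_left)
  moreover have "(\<integral>x. c x * (f x + h x) \<partial>M) = (\<integral>x. c x * f x \<partial>M) + (\<integral>x. c x * h x \<partial>M)"
    by (subst Bochner_Integration.integral_add[symmetric])
       (auto intro!: int_c_mult[OF cm cb] add Bochner_Integration.integral_cong simp: distrib_left)
  ultimately show ?case using tendsto_add[OF add(2) add(4)] by simp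
next
  case (lim f s)
  define L where "L i = (\<integral>x. \<bar>s i x - f x\<bar> \<partial>M)" for i
  have sm: "\<And>i. s i \<in> borel_measurable M" using lim(1) by auto
  have fm: "f \<in> borel_measurable M" using lim(5) by auto
  have "(\<lambda>i. L i) \<longlonglongrightarrow> (\<integral>x. 0 \<partial>M)"
    unfolding L_def
  proof (rule integral_dominated_convergence[where w="\<lambda>x. 3 * \<bar>f x\<bar>"])
    show "integrable M (\<lambda>x. 3 * \<bar>f x\<bar>)" using lim(5) by auto
    show "AE x in M. (\<lambda>i. \<bar>s i x - f x\<bar>) \<longlonglongrightarrow> 0"
      using lim(3) by (intro AE_I2) (metis LIM_zero tendsto_rabs_zero)
    show "\<And>i. AE x in M. norm \<bar>s i x - f x\<bar> \<le> 3 * \<bar>f x\<bar>"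
      using lim(4) by (intro AE_I2) (smt (verit) real_norm_def)
  qed (use sm fm in auto)
  then have L0: "L \<longlonglongrightarrow> 0" by simp
  define K' where "K' = \<bar>K\<bar> + 1"
  have K'pos: "K' > 0" unfolding K'_def by auto
  show ?case
  proof (rule LIMSEQ_I)
    fix r :: real assume r: "0 < r"
    obtain i where Li: "norm (L i - 0) < r / (3 * K')"
      using LIMSEQ_D[OF L0, of "r / (3 * K')"] r K'pos by auto
    obtain no where no: "\<And>n. n \<ge> no \<Longrightarrow> norm ((\<integral>x. indicator (C n) x * s i x \<partial>M) - (\<integral>x. c x * s i x \<partial>M)) < r / 3"
      using LIMSEQ_D[OF lim(2)[of i], of "r/3"] r by auto
    have Lnn: "L i \<ge> 0" unfolding L_def by auto
    have b2: "\<bar>(\<integral>x. c x * f x \<partial>M) - (\<integral>x. c x * s i x \<partial>M)\<bar> \<le> \<bar>K\<bar> * L i"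
    proof -
      have "(\<integral>x. c x * f x \<partial>M) - (\<integral>x. c x * s i x \<partial>M) = (\<integral>x. c x * (f x - s i x) \<partial>M)"
        by (subst Bochner_Integration.integral_diff[symmetric])
           (auto intro!: int_c_mult[OF cm cb] lim Bochner_Integration.integral_cong simp: right_diff_distrib)
      also have "\<bar>\<dots>\<bar> \<le> (\<integral>x. \<bar>c x * (f x - s i x)\<bar> \<partial>M)"
        using Bochner_Integration.integral_norm_bound[of M "\<lambda>x. c x * (f x - s i x)"] by simp
      also have "\<dots> \<le> (\<integral>x. \<bar>K\<bar> * \<bar>s i x - f x\<bar> \<partial>M)"
      proof (rule integral_mono_AE)
        show "integrable M (\<lambda>x. \<bar>c x * (f x - s i x)\<bar>)"
          by (intro integrable_abs int_c_mult[OF cm cb] Bochner_Integration.integrable_diff lim)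
        show "integrable M (\<lambda>x. \<bar>K\<bar> * \<bar>s i x - f x\<bar>)"
          by (intro integrable_mult_right integrable_abs Bochner_Integration.integrable_diff lim)
        show "AE x in M. \<bar>c x * (f x - s i x)\<bar> \<le> \<bar>K\<bar> * \<bar>s i x - f x\<bar>"
          using cb by eventually_elim (auto simp: abs_mult abs_minus_commute intro!: mult_right_mono)
      qed
      also have "\<dots> = \<bar>K\<bar> * L i" unfolding L_def by simp
      finally show ?thesis .
    qed
    show "\<exists>no. \<forall>n\<ge>no. norm ((\<integral>x. indicator (C n) x * f x \<partial>M) - (\<integral>x. c x * f x \<partial>M)) < r"
    proof (intro exI allI impI)
      fix n assume n: "n \<ge> no"
      have b1: "\<bar>(\<integral>x. indicator (C n) x * f x \<partial>M) - (\<integral>x. indicator (C n) x * s i x \<partial>M)\<bar> \<le> L i"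
      proof -
        have "(\<integral>x. indicator (C n) x * f x \<partial>M) - (\<integral>x. indicator (C n) x * s i x \<partial>M) = (\<integral>x. indicator (C n) x * (f x - s i x) \<partial>M)"
          by (subst Bochner_Integration.integral_diff[symmetric])
             (auto intro!: int_ind_mult C lim Bochner_Integration.integral_cong simp: right_diff_distrib)
        also have "\<bar>\<dots>\<bar> \<le> (\<integral>x. \<bar>indicator (C n) x * (f x - s i x)\<bar> \<partial>M)"
          using Bochner_Integration.integral_norm_bound[of M "\<lambda>x. indicator (C n) x * (f x - s i x)"] by simp
        also have "\<dots> \<le> L i" unfolding L_def
        proof (rule integral_mono)
          show "integrable M (\<lambda>x. \<bar>indicator (C n) x * (f x - s i x)\<bar>)"
            by (intro integrable_abs int_ind_mult C Bochner_Integration.integrable_diff lim)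
          show "integrable M (\<lambda>x. \<bar>s i x - f x\<bar>)"
            by (intro integrable_abs Bochner_Integration.integrable_diff lim)
          show "\<And>x. x \<in> space M \<Longrightarrow> \<bar>indicator (C n) x * (f x - s i x)\<bar> \<le> \<bar>s i x - f x\<bar>"
            by (auto simp: indicator_def)
        qed
        finally show ?thesis .
      qed
      have "\<bar>K\<bar> * L i \<le> K' * L i" using Lnn unfolding K'_def by (intro mult_right_mono) auto
      moreover have "L i \<le> K' * L i" using Lnn unfolding K'_def by (simp add: distrib_right)
      moreover have "K' * L i < r / 3" using Li K'pos Lnn by (simp add: field_simps)
      moreover note no[OF n] b1 b2
      ultimately show "norm ((\<integral>x. indicator (C n) x * f x \<partial>M) - (\<integral>x. c x * f x \<partial>M)) < r"
        unfolding real_norm_def by linarith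
    qed
  qed
qed

lemma wk_nonneg:
  fixes M :: "'a measure" and C :: "nat \<Rightarrow> 'a set" and c :: "'a \<Rightarrow> real"
  assumes C: "\<And>n. C n \<in> sets M" and cm: "c \<in> borel_measurable M"
    and ci: "integrable M c" and w: "weak_star_conv M (\<lambda>n. indicator (C n)) c"
  shows "AE x in M. 0 \<le> c x"
proof -
  define X where "X = {x\<in>space M. c x < 0}"
  have X: "X \<in> sets M" unfolding X_def using cm by measurable
  have "(\<lambda>n. set_lebesgue_integral M X (indicator (C n))) \<longlonglongrightarrow> set_lebesgue_integral M X c"
    using w X unfolding weak_star_conv_def by blast
  moreover have "\<And>n. 0 \<le> set_lebesgue_integral M X (indicator (C n) :: 'a \<Rightarrow> real)"
    unfolding set_lebesgue_integral_def by (intro integral_nonneg_AE AE_I2) (auto simp: indicator_def)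
  ultimately have ge: "0 \<le> set_lebesgue_integral M X c"
    by (intro LIMSEQ_le_const) auto
  define h where "h x = - (indicator X x * c x)" for x
  have hi: "integrable M h" unfolding h_def using int_ind_mult[OF X ci] by auto
  have hnn: "AE x in M. 0 \<le> h x" unfolding h_def X_def by (intro AE_I2) (auto simp: indicator_def)
  have "0 \<le> integral\<^sup>L M h" by (rule integral_nonneg_AE[OF hnn])
  moreover have "integral\<^sup>L M h = - set_lebesgue_integral M X c"
    unfolding h_def set_lebesgue_integral_def by simp
  ultimately have "integral\<^sup>L M h = 0" using ge by linarith
  then have "AE x in M. h x = 0" using integral_nonneg_eq_0_iff_AE[OF hi hnn] by simp
  then show ?thesis using AE_space
    by eventually_elim (auto simp: h_def X_def indicator_def split: if_splits)
qed

lemma int_bound1: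
  fixes f :: "'a \<Rightarrow> real"
  assumes P: "prob_space M" and fm: "f \<in> borel_measurable M" and b: "\<And>x. x \<in> space M \<Longrightarrow> \<bar>f x\<bar> \<le> 1"
  shows "\<bar>integral\<^sup>L M f\<bar> \<le> 1"
proof -
  interpret prob_space M by fact
  have fi: "integrable M f"
    by (rule integrable_const_bound[where B=1]) (use b fm in auto)
  have "\<bar>integral\<^sup>L M f\<bar> \<le> (\<integral>x. \<bar>f x\<bar> \<partial>M)"
    using Bochner_Integration.integral_norm_bound[of M f] by simp
  also have "\<dots> \<le> (\<integral>x. 1 \<partial>M)"
    by (rule integral_mono) (use fi b in auto)
  also have "\<dots> = 1" by (simp add: prob_space)
  finally show ?thesis .
qed

theorem claim4p3:
  fixes M :: "'a::polish_space measure"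
    and Wn :: "nat \<Rightarrow> 'a \<times> 'a \<Rightarrow> real" and W :: "'a \<times> 'a \<Rightarrow> real"
    and A B :: "nat \<Rightarrow> 'a set" and a b :: "'a \<Rightarrow> real"
  assumes "std_atomless_prob_space M"
    and "\<And>n. graphon M (Wn n)" and "graphon M W"
    and "(\<lambda>n. cut_norm M (\<lambda>z. Wn n z - W z)) \<longlonglongrightarrow> 0"
    and "\<And>n. A n \<in> sets M" and "\<And>n. B n \<in> sets M"
    and "\<And>n. set_lebesgue_integral (M \<Otimes>\<^sub>M M) (A n \<times> B n) (Wn n) = 0"
    and "a \<in> Linfty M" and "b \<in> Linfty M"
    and "weak_star_conv M (\<lambda>n. indicator (A n)) a"
    and "weak_star_conv M (\<lambda>n. indicator (B n)) b"
  shows "set_lebesgue_integral (M \<Otimes>\<^sub>M M) (supp a \<times> supp b) W = 0"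
proof -
  note std = assms(1) and gWn = assms(2) and gW = assms(3) and cut = assms(4)
  note AM[measurable] = assms(5) and BM[measurable] = assms(6) and zero = assms(7)
  note wa = assms(10) and wb = assms(11)
  have P: "prob_space M" and sM: "sets M = sets borel" using std unfolding std_atomless_prob_space_def by auto
  have spM: "space M = UNIV" using sets_eq_imp_space_eq[OF sM] by simp
  interpret pair_prob_space M M by (simp add: pair_prob_space_def pair_sigma_finite_def P prob_space_imp_sigma_finite)
  let ?N = "M \<Otimes>\<^sub>M M"
  have PN: "prob_space ?N" by (rule prob_space_axioms)
  have fM: "finite_measure M" using P by (simp add: prob_space_def)
  have fN: "finite_measure ?N" using PN by (simp add: prob_space_def)
  have spN: "space ?N = UNIV" by (simp add: space_pair_measure spM)
  have Wm[measurable]: "W \<in> borel_measurable ?N" using gW unfolding graphon_def by auto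
  have Wnm[measurable]: "\<And>n. Wn n \<in> borel_measurable ?N" using gWn unfolding graphon_def by auto
  have W01: "\<And>z. 0 \<le> W z \<and> W z \<le> 1" using gW unfolding graphon_def spM by auto
  have Wn01: "\<And>n z. 0 \<le> Wn n z \<and> Wn n z \<le> 1" using gWn unfolding graphon_def spM by auto
  have am[measurable]: "a \<in> borel_measurable M" and bm[measurable]: "b \<in> borel_measurable M"
    using assms(8,9) unfolding Linfty_def by auto
  obtain Ka where Ka: "AE x in M. \<bar>a x\<bar> \<le> Ka" using assms(8) unfolding Linfty_def by auto
  obtain Kb where Kb: "AE x in M. \<bar>b x\<bar> \<le> Kb" using assms(9) unfolding Linfty_def by auto
  have ai: "integrable M a" by (rule finite_measure.integrable_const_bound[OF fM, OF _ am]) (use Ka in auto)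
  have bi: "integrable M b" by (rule finite_measure.integrable_const_bound[OF fM, OF _ bm]) (use Kb in auto)
  have Wi: "integrable ?N W" by (rule finite_measure.integrable_const_bound[OF fN, where B=1]) (use W01 in auto)
  have Wni: "\<And>n. integrable ?N (Wn n)" by (rule finite_measure.integrable_const_bound[OF fN, where B=1]) (use Wn01 in auto)

  define T where "T n = set_lebesgue_integral ?N (A n \<times> B n) W" for n
  have T0: "T \<longlonglongrightarrow> 0"
  proof (rule Lim_null_comparison[OF _ cut])
    show "\<forall>\<^sub>F n in sequentially. norm (T n) \<le> cut_norm M (\<lambda>z. Wn n z - W z)"
    proof (intro always_eventually allI)
      fix n
      have S: "A n \<times> B n \<in> sets ?N" by measurable
      have d1: "\<And>z. \<bar>Wn n z - W z\<bar> \<le> 1" using Wn01 W01 by (smt (verit))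
      have bd: "\<And>ST. ST \<in> sets M \<times> sets M \<Longrightarrow>
          \<bar>set_lebesgue_integral ?N (fst ST \<times> snd ST) (\<lambda>z. Wn n z - W z)\<bar> \<le> 1"
        unfolding set_lebesgue_integral_def
        by (rule int_bound1[OF PN]) (use d1 in \<open>auto simp: indicator_def\<close>)
      have "\<bar>set_lebesgue_integral ?N (A n \<times> B n) (\<lambda>z. Wn n z - W z)\<bar> \<le> cut_norm M (\<lambda>z. Wn n z - W z)"
      proof -
        have bdd: "bdd_above ((\<lambda>ST. \<bar>set_lebesgue_integral ?N (fst ST \<times> snd ST) (\<lambda>z. Wn n z - W z)\<bar>) ` (sets M \<times> sets M))"
          by (rule bdd_aboveI2[where M=1]) (rule bd)
        have "(A n, B n) \<in> sets M \<times> sets M" by auto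
        from cSUP_upper[OF this bdd] show ?thesis unfolding cut_norm_def by simp
      qed
      moreover have "set_lebesgue_integral ?N (A n \<times> B n) (\<lambda>z. Wn n z - W z) = 0 - T n"
        unfolding T_def zero[of n, symmetric]
        by (rule set_integral_diff) (auto simp: set_integrable_def intro!: int_ind_mult S Wi Wni)
      ultimately show "norm (T n) \<le> cut_norm M (\<lambda>z. Wn n z - W z)" by simp
    qed
  qed
  define F where "F n x = (\<integral>y. indicator (B n) y * W (x, y) \<partial>M)" for n x
  define G where "G x = (\<integral>y. b y * W (x, y) \<partial>M)" for x
  have Fm[measurable]: "\<And>n. F n \<in> borel_measurable M"
    unfolding F_def by measurable
  have Gm[measurable]: "G \<in> borel_measurable M"
    unfolding G_def by measurable
  have TF: "T n = (\<integral>x. indicator (A n) x * F n x \<partial>M)" for n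
  proof -
    have S: "A n \<times> B n \<in> sets ?N" by measurable
    have "T n = (\<integral>x. \<integral>y. indicator (A n \<times> B n) (x, y) *\<^sub>R W (x, y) \<partial>M \<partial>M)"
      unfolding T_def set_lebesgue_integral_def
      by (rule integral_fst'[symmetric]) (intro integrable_mult_indicator S Wi)
    also have "\<dots> = (\<integral>x. indicator (A n) x * F n x \<partial>M)"
      unfolding F_def by (rule Bochner_Integration.integral_cong) (auto simp: indicator_times mult.assoc)
    finally show ?thesis .
  qed
  have Wxm[measurable]: "\<And>x. (\<lambda>y. W (x, y)) \<in> borel_measurable M"
    by (rule measurable_Pair2[OF Wm]) (simp add: spM)
  have Wx: "\<And>x. integrable M (\<lambda>y. W (x, y))"
    by (rule finite_measure.integrable_const_bound[OF fM, where B=1]) (use W01 Wxm in auto)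
  have FG: "\<And>x. (\<lambda>n. F n x) \<longlonglongrightarrow> G x"
    unfolding F_def G_def by (rule wk_int[OF BM bm Kb wb Wx])
  have F1: "\<And>n x. \<bar>F n x\<bar> \<le> 1"
    unfolding F_def by (rule int_bound1[OF P], measurable) (use W01 in \<open>auto simp: indicator_def\<close>)
  have G1: "\<And>x. \<bar>G x\<bar> \<le> 1"
    by (rule LIMSEQ_le_const2[OF tendsto_rabs[OF FG]]) (use F1 in auto)
  have Gi: "integrable M G" by (rule finite_measure.integrable_const_bound[OF fM, where B=1]) (use G1 in auto)
  have E0: "(\<lambda>n. \<integral>x. \<bar>F n x - G x\<bar> \<partial>M) \<longlonglongrightarrow> (\<integral>x. 0 \<partial>M)"
  proof (rule integral_dominated_convergence[where w="\<lambda>x. 2"])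
    show "AE x in M. (\<lambda>n. \<bar>F n x - G x\<bar>) \<longlonglongrightarrow> 0"
      using FG by (intro AE_I2) (metis LIM_zero tendsto_rabs_zero)
    show "\<And>n. AE x in M. norm \<bar>F n x - G x\<bar> \<le> 2"
      using F1 G1 by (intro AE_I2) (simp add: abs_le_iff, smt (verit))
  qed auto
  have D0: "(\<lambda>n. T n - (\<integral>x. indicator (A n) x * G x \<partial>M)) \<longlonglongrightarrow> 0"
  proof (rule Lim_null_comparison[OF _ E0[simplified]])
    show "\<forall>\<^sub>F n in sequentially. norm (T n - (\<integral>x. indicator (A n) x * G x \<partial>M)) \<le> (\<integral>x. \<bar>F n x - G x\<bar> \<partial>M)"
    proof (intro always_eventually allI)
      fix n
      have Fi: "integrable M (F n)" by (rule finite_measure.integrable_const_bound[OF fM, where B=1]) (use F1 in auto)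
      have "T n - (\<integral>x. indicator (A n) x * G x \<partial>M) = (\<integral>x. indicator (A n) x * (F n x - G x) \<partial>M)"
        unfolding TF
        by (subst Bochner_Integration.integral_diff[symmetric])
           (auto intro!: int_ind_mult Fi Gi Bochner_Integration.integral_cong simp: right_diff_distrib)
      also have "\<bar>\<dots>\<bar> \<le> (\<integral>x. \<bar>indicator (A n) x * (F n x - G x)\<bar> \<partial>M)"
        using Bochner_Integration.integral_norm_bound[of M "\<lambda>x. indicator (A n) x * (F n x - G x)"] by simp
      also have "\<dots> \<le> (\<integral>x. \<bar>F n x - G x\<bar> \<partial>M)"
      proof (rule integral_mono)
        show "integrable M (\<lambda>x. \<bar>indicator (A n) x * (F n x - G x)\<bar>)"
          by (intro integrable_abs int_ind_mult AM Bochner_Integration.integrable_diff Fi Gi)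
        show "integrable M (\<lambda>x. \<bar>F n x - G x\<bar>)"
          by (intro integrable_abs Bochner_Integration.integrable_diff Fi Gi)
      qed (auto simp: indicator_def)
      finally show "norm (T n - (\<integral>x. indicator (A n) x * G x \<partial>M)) \<le> (\<integral>x. \<bar>F n x - G x\<bar> \<partial>M)"
        by simp
    qed
  qed
  have AG: "(\<lambda>n. \<integral>x. indicator (A n) x * G x \<partial>M) \<longlonglongrightarrow> (\<integral>x. a x * G x \<partial>M)"
    by (rule wk_int[OF AM am Ka wa Gi])
  have "T \<longlonglongrightarrow> (\<integral>x. a x * G x \<partial>M)"
    using tendsto_add[OF D0 AG] by simp
  then have aG0: "(\<integral>x. a x * G x \<partial>M) = 0" using T0 LIMSEQ_unique by blast
  have anh: "AE x in M. 0 \<le> a x" by (rule wk_nonneg[OF AM am ai wa])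
  have bnh: "AE x in M. 0 \<le> b x" by (rule wk_nonneg[OF BM bm bi wb])
  define H where "H z = a (fst z) * (b (snd z) * W z)" for z
  have Hm[measurable]: "H \<in> borel_measurable ?N" unfolding H_def by measurable
  have AEN: "AE z in ?N. 0 \<le> a (fst z) \<and> 0 \<le> b (snd z) \<and> \<bar>a (fst z)\<bar> \<le> Ka \<and> \<bar>b (snd z)\<bar> \<le> Kb"
  proof (rule AE_pair_measure)
    show "{z \<in> space ?N. 0 \<le> a (fst z) \<and> 0 \<le> b (snd z) \<and> \<bar>a (fst z)\<bar> \<le> Ka \<and> \<bar>b (snd z)\<bar> \<le> Kb} \<in> sets ?N"
      by measurable
    have B2: "AE y in M. 0 \<le> b y \<and> \<bar>b y\<bar> \<le> Kb" using bnh Kb by eventually_elim auto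
    show "AE x in M. AE y in M. 0 \<le> a (fst (x, y)) \<and> 0 \<le> b (snd (x, y)) \<and> \<bar>a (fst (x, y))\<bar> \<le> Ka \<and> \<bar>b (snd (x, y))\<bar> \<le> Kb"
      using anh Ka
    proof eventually_elim
      case (elim x)
      show ?case using B2 by eventually_elim (use elim in auto)
    qed
  qed
  have Hi: "integrable ?N H"
  proof (rule finite_measure.integrable_const_bound[OF fN, where B="\<bar>Ka\<bar> * \<bar>Kb\<bar>"])
    show "AE z in ?N. norm (H z) \<le> \<bar>Ka\<bar> * \<bar>Kb\<bar>"
      using AEN
    proof eventually_elim
      case (elim z)
      have "\<bar>H z\<bar> = \<bar>a (fst z)\<bar> * \<bar>b (snd z)\<bar> * \<bar>W z\<bar>" unfolding H_def by (simp add: abs_mult)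
      also have "\<dots> \<le> \<bar>Ka\<bar> * \<bar>Kb\<bar> * 1"
        using elim W01[of z] by (intro mult_mono) auto
      finally show ?case by simp
    qed
  qed (rule Hm)
  have "integral\<^sup>L ?N H = (\<integral>x. \<integral>y. H (x, y) \<partial>M \<partial>M)" by (rule integral_fst'[symmetric, OF Hi])
  also have "\<dots> = (\<integral>x. a x * G x \<partial>M)" unfolding H_def G_def by simp
  finally have H0: "integral\<^sup>L ?N H = 0" using aG0 by simp
  have Hnn: "AE z in ?N. 0 \<le> H z"
    using AEN unfolding H_def by eventually_elim (use W01 in auto)
  have HAE: "AE z in ?N. H z = 0" using integral_nonneg_eq_0_iff_AE[OF Hi Hnn] H0 by simp
  have Sm: "supp a \<times> supp b \<in> sets ?N"
  proof -
    have "supp a = {x \<in> space M. a x \<noteq> 0}" "supp b = {x \<in> space M. b x \<noteq> 0}"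
      unfolding supp_def spM by auto
    then show ?thesis by simp
  qed
  have "set_lebesgue_integral ?N (supp a \<times> supp b) W = (\<integral>z. 0 \<partial>?N)"
    unfolding set_lebesgue_integral_def
  proof (rule integral_cong_AE)
    show "(\<lambda>z. indicator (supp a \<times> supp b) z *\<^sub>R W z) \<in> borel_measurable ?N"
      using Sm by measurable
    show "AE z in ?N. indicator (supp a \<times> supp b) z *\<^sub>R W z = 0"
      using HAE by eventually_elim (auto simp: H_def supp_def indicator_def)
  qed simp
  then show ?thesis by simp
qed

end
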